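(* Let $\mathbf u$ be the infinite word over $\{0,1,2,3\}$ that is the fixed point starting with $0$ of the morphism $\varphi$ given by $\varphi(0)=0130$, $\varphi(1)=1021$, $\varphi(2)=102$, $\varphi(3)=013$, and let $\lambda=2+\sqrt3$. Set $p_0=p_2=10210$ and $p_1=p_3=01301$. If $v$ is a bispecial factor of $\mathbf u$ of length greater than $5$, then there is a factor $w$ of $\mathbf u$ with last letter $w_n$ such that $v=\varphi(w)p_{w_n}$, and moreover $\rho(v)=\frac{1}{\lambda}\rho(w)$.
   Context: The fixed point starting with $0$ is the unique infinite word having $\varphi^n(0)$ as a prefix for every $n$; since $\varphi$ is primitive, all factor frequencies of $\mathbf u$ exist. The frequency of a factor $w$ is $\rho(w)=\lim_{|v|\to\infty,\, v \text{ factor of } \mathbf u} \frac{\#\{\text{occurrences of } w \text{ in } v\}}{|v|}$. ($\lambda$ is the dominant eigenvalue of the incidence matrix of $\varphi$.) A factor $w$ is right special if $wa,wb$ are factors of $\mathbf u$ for two distinct letters $a,b$, left special if $aw,bw$ are factors for two distinct letters, and bispecial if both. *)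

theory Defs
  imports Complex_Main
begin

fun phi :: "nat \<Rightarrow> nat list" where
  "phi n = (if n = 0 then [0,1,3,0] else if n = 1 then [1,0,2,1]
            else if n = 2 then [1,0,2] else [0,1,3])"

definition phiw :: "nat list \<Rightarrow> nat list" where
  "phiw w = concat (map phi w)"

text \<open>The fixed point starting with 0: the n-th letter is the n-th letter of
  phi^(n+1)(0), which has length greater than n and is a prefix of all
  further iterates.\<close>
definition u :: "nat \<Rightarrow> nat" where
  "u n = ((phiw ^^ (Suc n)) [0]) ! n"

definition factor :: "nat list \<Rightarrow> bool" where
  "factor w \<longleftrightarrow> (\<exists>i. w = map u [i..<i + length w])"

definition right_special :: "nat list \<Rightarrow> bool" where
  "right_special w \<longleftrightarrow> (\<exists>a b. a \<noteq> b \<and> factor (w @ [a]) \<and> factor (w @ [b]))"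

definition left_special :: "nat list \<Rightarrow> bool" where
  "left_special w \<longleftrightarrow> (\<exists>a b. a \<noteq> b \<and> factor (a # w) \<and> factor (b # w))"

definition bispecial :: "nat list \<Rightarrow> bool" where
  "bispecial w \<longleftrightarrow> left_special w \<and> right_special w"

definition occ :: "nat list \<Rightarrow> nat list \<Rightarrow> nat" where
  "occ w v = card {i. i + length w \<le> length v \<and> take (length w) (drop i v) = w}"

definition has_freq :: "nat list \<Rightarrow> real \<Rightarrow> bool" where
  "has_freq w r \<longleftrightarrow> (\<forall>e>0. \<exists>N. \<forall>v. factor v \<and> length v \<ge> N \<longrightarrow>
      \<bar>real (occ w v) / real (length v) - r\<bar> < e)"

definition rho :: "nat list \<Rightarrow> real" where
  "rho w = (THE r. has_freq w r)"

definition lam :: real where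
  "lam = 2 + sqrt 3"

definition p :: "nat \<Rightarrow> nat list" where
  "p a = (if a = 0 \<or> a = 2 then [1,0,2,1,0] else [0,1,3,0,1])"

end

theory Submission
  imports Defs
begin

declare phi.simps[simp del]
lemma phi_simps[simp]: "phi 0 = [0,1,3,0]" "phi (Suc 0) = [1,0,2,1]" "phi 2 = [1,0,2]" "phi 3 = [0,1,3]"
  by (simp_all add: phi.simps)

definition W :: "nat \<Rightarrow> nat list" where "W k = (phiw ^^ k) [0]"

lemma phiw_Nil[simp]: "phiw [] = []" by (simp add: phiw_def)
lemma phiw_Cons[simp]: "phiw (a # x) = phi a @ phiw x" by (simp add: phiw_def)
lemma phiw_append[simp]: "phiw (x @ y) = phiw x @ phiw y" by (simp add: phiw_def)

lemma len_phi: "length (phi a) \<ge> 3" "length (phi a) \<le> 4" by (auto simp: phi.simps)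

lemma length_phiw: "length (phiw x) \<ge> 3 * length x"
proof (induction x)
  case (Cons a x) then show ?case using len_phi[of a] by simp
qed simp

lemma W_Suc: "W (Suc k) = phiw (W k)" by (simp add: W_def)

lemma W_prefix: "\<exists>z. W (Suc k) = W k @ z"
proof (induction k)
  case 0 show ?case by (simp add: W_def)
next
  case (Suc k)
  then obtain z where "W (Suc k) = W k @ z" by blast
  then have "W (Suc (Suc k)) = W (Suc k) @ phiw z" by (simp add: W_Suc[of "Suc k"] W_Suc[of k])
  then show ?case by blast
qed

lemma W_prefix_le: "k \<le> m \<Longrightarrow> \<exists>z. W m = W k @ z"
proof (induction m rule: dec_induct)
  case base then show ?case by simp
next
  case (step m)
  then obtain z where "W m = W k @ z" by blast
  moreover obtain z' where "W (Suc m) = W m @ z'" using W_prefix by blast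
  ultimately show ?case by auto
qed

lemma W_length: "length (W k) \<ge> Suc k"
proof (induction k)
  case 0 show ?case by (simp add: W_def)
next
  case (Suc k) then show ?case using length_phiw[of "W k"] by (simp add: W_Suc)
qed

lemma u_W: "n < length (W k) \<Longrightarrow> u n = W k ! n"
proof -
  assume n: "n < length (W k)"
  let ?M = "max k (Suc n)"
  obtain z where z: "W ?M = W k @ z" using W_prefix_le[of k ?M] by auto
  obtain z' where z': "W ?M = W (Suc n) @ z'" using W_prefix_le[of "Suc n" ?M] by auto
  have "u n = W (Suc n) ! n" by (simp add: u_def W_def)
  also have "\<dots> = W ?M ! n" using z' W_length[of "Suc n"] by (simp add: nth_append)
  also have "\<dots> = W k ! n" using z n by (simp add: nth_append)
  finally show ?thesis .
qed

lemma set_phiw: "set (phiw x) \<subseteq> {0,1,2,3}"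
  by (induction x) (auto simp: phi.simps)

lemma set_W: "set (W k) \<subseteq> {0,1,2,3}"
proof (cases k)
  case 0 then show ?thesis by (simp add: W_def)
next
  case (Suc m) then show ?thesis using set_phiw[of "W m"] by (simp add: W_Suc)
qed

lemma u_le3: "u n \<le> 3"
proof -
  have "u n = W (Suc n) ! n" by (simp add: u_def W_def)
  moreover have "W (Suc n) ! n \<in> set (W (Suc n))" using W_length[of "Suc n"] by simp
  ultimately show ?thesis using set_W[of "Suc n"] by auto
qed

lemma map_u_W: "n \<le> length (W k) \<Longrightarrow> map u [0..<n] = take n (W k)"
  by (rule nth_equalityI) (auto simp: u_W)

definition pos :: "nat \<Rightarrow> nat" where "pos j = length (phiw (map u [0..<j]))"
abbreviation len :: "nat \<Rightarrow> nat" where "len c \<equiv> length (phi c)"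

lemma pos_0[simp]: "pos 0 = 0" by (simp add: pos_def)
lemma pos_Suc: "pos (Suc j) = pos j + len (u j)" by (simp add: pos_def)

lemma u_pos: "t < len (u j) \<Longrightarrow> u (pos j + t) = phi (u j) ! t"
proof -
  assume t: "t < len (u j)"
  have jl: "Suc j \<le> length (W j)" using W_length[of j] by simp
  have tk: "take (Suc j) (W j) = map u [0..<Suc j]" using map_u_W[OF jl] by simp
  have "W (Suc j) = phiw (take (Suc j) (W j)) @ phiw (drop (Suc j) (W j))"
    by (simp add: W_Suc flip: phiw_append)
  also have "\<dots> = phiw (map u [0..<j]) @ phi (u j) @ phiw (drop (Suc j) (W j))"
    by (simp add: tk)
  finally have e: "W (Suc j) = phiw (map u [0..<j]) @ phi (u j) @ phiw (drop (Suc j) (W j))" .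
  have "pos j + t < length (W (Suc j))" using t by (simp add: e pos_def)
  then have "u (pos j + t) = W (Suc j) ! (pos j + t)" by (rule u_W)
  also have "\<dots> = phi (u j) ! t" using t by (simp add: e pos_def nth_append)
  finally show ?thesis .
qed

lemma u_cases: "u k = 0 \<or> u k = 1 \<or> u k = 2 \<or> u k = 3"
  using u_le3[of k] by auto

lemma len_u: "len (u k) = 3 \<or> len (u k) = 4" using u_cases[of k] by auto

lemma pos_Suc_gt: "pos j + 3 \<le> pos (Suc j)" using len_phi[of "u j"] by (simp add: pos_Suc)

lemma pos_smono: "strict_mono pos"
  unfolding strict_mono_Suc_iff
proof
  fix n show "pos n < pos (Suc n)" using pos_Suc_gt[of n] by linarith
qed

lemma pos_less_iff[simp]: "pos a < pos b \<longleftrightarrow> a < b"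
  using pos_smono by (simp add: strict_mono_less)
lemma pos_le_iff[simp]: "pos a \<le> pos b \<longleftrightarrow> a \<le> b"
  using pos_smono by (simp add: strict_mono_less_eq)
lemma pos_eq_iff[simp]: "pos a = pos b \<longleftrightarrow> a = b"
  using pos_smono by (simp add: strict_mono_eq)

lemma pos_ge: "3 * j \<le> pos j"
proof (induction j)
  case (Suc j) then show ?case using pos_Suc_gt[of j] by simp
qed simp

lemma decomp: "\<exists>k t. t < len (u k) \<and> i = pos k + t"
proof -
  have ex: "\<exists>k. i < pos (Suc k)" using pos_ge[of "Suc i"] by (intro exI[of _ i]) simp
  define k where "k = (LEAST k. i < pos (Suc k))"
  have k1: "i < pos (Suc k)" unfolding k_def by (rule LeastI_ex[OF ex])
  have k2: "pos k \<le> i"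
  proof (cases k)
    case 0 then show ?thesis by simp
  next
    case (Suc m)
    have "\<not> i < pos (Suc m)" using not_less_Least[of m "\<lambda>k. i < pos (Suc k)"] Suc k_def by simp
    then show ?thesis using Suc by simp
  qed
  show ?thesis using k1 k2 by (intro exI[of _ k] exI[of _ "i - pos k"]) (simp add: pos_Suc)
qed

lemma decomp_unique:
  assumes "t < len (u k)" "t' < len (u k')" "pos k + t = pos k' + t'"
  shows "k = k' \<and> t = t'"
proof -
  have "\<not> k < k'"
  proof
    assume "k < k'" then have "pos (Suc k) \<le> pos k'" by simp
    then show False using assms by (simp add: pos_Suc)
  qed
  moreover have "\<not> k' < k"
  proof
    assume "k' < k" then have "pos (Suc k') \<le> pos k" by simp
    then show False using assms by (simp add: pos_Suc)
  qed
  ultimately show ?thesis using assms by simp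
qed

lemma c4: "c \<le> 3 \<Longrightarrow> c = 0 \<or> c = 1 \<or> c = 2 \<or> c = (3::nat)" by arith
lemma lt4: "t < 4 \<Longrightarrow> t = 0 \<or> t = 1 \<or> t = 2 \<or> t = (3::nat)" by arith
lemma lt3: "t < 3 \<Longrightarrow> t = 0 \<or> t = 1 \<or> t = (2::nat)" by arith
lemma phi_ne[simp]: "phi c \<noteq> []" using len_phi(1)[of c] by auto

lemma last_phi: "phi c ! (len c - 1) = c" if "c \<le> 3" using c4[OF that] by auto

definition R :: "nat \<Rightarrow> nat \<Rightarrow> bool" where
  "R a b \<longleftrightarrow> (a = 0 \<and> (b = 1 \<or> b = 2)) \<or> (a = 1 \<and> (b = 0 \<or> b = 3)) \<or> (a = 2 \<and> b = 1) \<or> (a = 3 \<and> b = 0)"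

lemma u_pos_last: "u (pos k + (len (u k) - 1)) = u k"
  using u_pos[of "len (u k) - 1" k] len_phi[of "u k"] last_phi[OF u_le3[of k]] by simp

lemma u_pos_Suc0: "u (pos (Suc k)) = phi (u (Suc k)) ! 0"
  using u_pos[of 0 "Suc k"] by simp

lemma rule_u: "R (u i) (u (Suc i))"
proof (induction i rule: less_induct)
  case (less i)
  obtain k t where kt: "t < len (u k)" "i = pos k + t" using decomp by blast
  show ?case
  proof (cases "Suc t < len (u k)")
    case True
    have a: "u i = phi (u k) ! t" using kt u_pos by simp
    have b: "u (Suc i) = phi (u k) ! Suc t" using kt u_pos[OF True] by simp
    show ?thesis unfolding a b using u_cases[of k] True
      by (auto simp: R_def less_Suc_eq)
  next
    case False
    then have t: "t = len (u k) - 1" using kt by simp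
    have a: "u i = u k" using u_pos_last kt t by simp
    have "Suc i = pos (Suc k)" using kt t len_phi[of "u k"] by (simp add: pos_Suc)
    then have b: "u (Suc i) = phi (u (Suc k)) ! 0" using u_pos_Suc0 by simp
    have "k < i" using kt(2) pos_ge[of k] t len_phi(1)[of "u k"] by linarith
    then have "R (u k) (u (Suc k))" by (rule less.IH)
    then show ?thesis unfolding a b using u_cases[of "Suc k"] by (auto simp: R_def)
  qed
qed

lemma u23_iff: "u q = 2 \<or> u q = 3 \<longleftrightarrow> (\<exists>k. q = pos k + 2)"
proof
  assume h: "u q = 2 \<or> u q = 3"
  obtain k t where kt: "t < len (u k)" "q = pos k + t" using decomp by blast
  have "u q = phi (u k) ! t" using kt u_pos by simp
  then have "t = 2" using h kt u_cases[of k]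
    by (auto simp: less_Suc_eq)
  then show "\<exists>k. q = pos k + 2" using kt by auto
next
  assume "\<exists>k. q = pos k + 2"
  then obtain k where "q = pos k + 2" by auto
  moreover have "u (pos k + 2) = phi (u k) ! 2" using u_pos[of 2 k] len_phi[of "u k"] by simp
  ultimately show "u q = 2 \<or> u q = 3" using u_cases[of k] by auto
qed

definition blk3 :: "nat \<Rightarrow> nat list" where
  "blk3 k = phi (u k) @ phi (u (Suc k)) @ phi (u (Suc (Suc k)))"

lemma u_blk3: "s < length (blk3 k) \<Longrightarrow> u (pos k + s) = blk3 k ! s"
proof -
  assume s: "s < length (blk3 k)"
  show ?thesis
  proof (cases "s < len (u k)")
    case True then show ?thesis by (simp add: blk3_def u_pos nth_append)
  next
    case F1: False
    show ?thesis
    proof (cases "s - len (u k) < len (u (Suc k))")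
      case True
      have "u (pos k + s) = u (pos (Suc k) + (s - len (u k)))" using F1 by (simp add: pos_Suc)
      also have "\<dots> = phi (u (Suc k)) ! (s - len (u k))" using True by (simp add: u_pos)
      finally show ?thesis using F1 True by (simp add: blk3_def nth_append)
    next
      case False
      have "u (pos k + s) = u (pos (Suc (Suc k)) + (s - len (u k) - len (u (Suc k))))"
        using F1 False by (simp add: pos_Suc)
      also have "\<dots> = phi (u (Suc (Suc k))) ! (s - len (u k) - len (u (Suc k)))"
        using s F1 False by (intro u_pos) (simp add: blk3_def)
      finally show ?thesis using F1 False by (simp add: blk3_def nth_append)
    qed
  qed
qed

lemma length_blk3: "length (blk3 k) \<ge> 9" using len_phi[of "u k"] len_phi[of "u (Suc k)"] len_phi[of "u (Suc (Suc k))"] by (simp add: blk3_def)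

lemma window:
  assumes "t < len (u k)" "i = pos k + t" "n \<le> 6"
  shows "map u [i..<i+n] = take n (drop t (blk3 k))"
proof (rule nth_equalityI)
  have "t + n \<le> length (blk3 k)" using assms length_blk3[of k] len_phi[of "u k"] by linarith
  then show "length (map u [i..<i + n]) = length (take n (drop t (blk3 k)))" by simp
  fix s assume "s < length (map u [i..<i + n])"
  then have s: "s < n" by simp
  have "t + s < length (blk3 k)" using assms s length_blk3[of k] len_phi[of "u k"] by linarith
  then show "map u [i..<i + n] ! s = take n (drop t (blk3 k)) ! s"
    using s assms u_blk3[of "t + s" k] by (simp add: add.assoc)
qed

lemma triple: "R (u k) (u (Suc k)) \<and> R (u (Suc k)) (u (Suc (Suc k)))"
  using rule_u by blast

definition triples :: "(nat \<times> nat \<times> nat) list" where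
  "triples = [(0,1,0),(0,1,3),(0,2,1),(1,0,1),(1,0,2),(1,3,0),(2,1,0),(2,1,3),(3,0,1),(3,0,2)]"
lemma R_triples: "R c d \<Longrightarrow> R d e \<Longrightarrow> (c,d,e) \<in> set triples"
  unfolding R_def  by (elim disjE conjE) (simp_all add: triples_def)

definition WL :: "nat \<Rightarrow> nat list list" where
  "WL n = concat (map (\<lambda>(c,d,e). map (\<lambda>t. take n (drop t (phi c @ phi d @ phi e))) [0..<len c]) triples)"

lemma win_WL:
  assumes "n \<le> 6"
  shows "map u [i..<i+n] \<in> set (WL n)"
proof -
  obtain k t where kt: "t < len (u k)" "i = pos k + t" using decomp by blast
  have tr: "(u k, u (Suc k), u (Suc (Suc k))) \<in> set triples" using triple[of k] R_triples by blast
  have eq: "map u [i..<i+n] = take n (drop t (blk3 k))" using window[OF kt assms] .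
  define f where "f = (\<lambda>(c,d,e). map (\<lambda>t. take n (drop t (phi c @ phi d @ phi e))) [0..<len c])"
  have "f (u k, u (Suc k), u (Suc (Suc k))) \<in> set (map f triples)" unfolding set_map using tr by (rule imageI)
  moreover have "take n (drop t (blk3 k)) \<in> set (f (u k, u (Suc k), u (Suc (Suc k))))"
    using kt(1) by (simp add: blk3_def f_def)
  ultimately show ?thesis unfolding WL_def set_concat eq f_def[symmetric] by blast
qed

lemma WL4: "set (WL 4) = {[0,1,0,2],[0,1,3,0],[0,2,1,0],[1,0,1,3],[1,0,2,1],[1,3,0,1],[2,1,0,1],[2,1,0,2],[3,0,1,0],[3,0,1,3]}"
  by (simp add: WL_def triples_def insert_commute)

lemma win4: "[u i, u (i+1), u (i+2), u (i+3)] \<in> set (WL 4)"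
proof -
  have "map u [i..<i+4] = [u i, u (i+1), u (i+2), u (i+3)]" by (simp add: upt_rec numeral_eq_Suc)
  then show ?thesis using win_WL[of 4 i] by simp
qed

definition F :: "nat \<Rightarrow> nat \<Rightarrow> nat" where
  "F a b = (if (a = 1 \<and> b = 3) \<or> (a = 2 \<and> b = 1) then 0 else if (a = 0 \<and> b = 2) \<or> (a = 3 \<and> b = 0) then 1
            else if a = 1 \<and> b = 0 then 2 else 3)"

definition G :: "nat \<Rightarrow> nat \<Rightarrow> nat \<Rightarrow> nat" where
  "G a b c = (if a = 0 \<and> b = 1 \<and> c = 0 then 2 else if a = 1 \<and> b = 0 \<and> c = 1 then 3
     else if (a = 0 \<and> b = 1 \<and> c = 3) \<or> (a = 0 \<and> b = 2 \<and> c = 1) then 0 else 1)"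

lemma F_lemma: "u (i+3) \<noteq> 2 \<Longrightarrow> u (i+3) \<noteq> 3 \<Longrightarrow> u i = F (u (i+1)) (u (i+2))"
  using win4[of i] unfolding WL4 by (auto simp: F_def)

lemma G_lemma: "u i \<noteq> 2 \<Longrightarrow> u i \<noteq> 3 \<Longrightarrow> u (i+3) = G (u i) (u (i+1)) (u (i+2))"
  using win4[of i] unfolding WL4 by (auto simp: G_def)

lemma spacing: "u i = 2 \<or> u i = 3 \<Longrightarrow> u (i+1) \<noteq> 2 \<and> u (i+1) \<noteq> 3 \<and> u (i+2) \<noteq> 2 \<and> u (i+2) \<noteq> 3"
  using win4[of i] unfolding WL4 by auto

lemma WL3: "set (WL 3) = {[0,1,0],[0,1,3],[0,2,1],[1,0,1],[1,0,2],[1,3,0],[2,1,0],[3,0,1]}"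
  by (simp add: WL_def triples_def insert_commute)

definition Oc :: "nat list \<Rightarrow> nat \<Rightarrow> bool" where
  "Oc w i \<longleftrightarrow> (\<forall>s<length w. u (i + s) = w ! s)"

lemma Oc_map: "Oc w i \<longleftrightarrow> map u [i..<i + length w] = w"
  unfolding Oc_def list_eq_iff_nth_eq by auto

lemma factor_Oc: "factor w \<longleftrightarrow> (\<exists>i. Oc w i)"
  unfolding factor_def Oc_map by metis

lemma Oc_nth: "Oc w i \<Longrightarrow> s < length w \<Longrightarrow> u (i + s) = w ! s"
  unfolding Oc_def by blast

lemma Oc_set: "Oc w i \<Longrightarrow> \<forall>c\<in>set w. c \<le> 3"
  unfolding Oc_def using u_le3 by (metis in_set_conv_nth)

lemma is23: "x = 2 \<or> x = 3 \<longleftrightarrow> x \<in> {2::nat,3}" by auto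

lemma LS_lemma:
  assumes "left_special v" "length v \<ge> 3"
  shows "v ! 2 = 2 \<or> v ! 2 = 3"
proof (rule ccontr)
  assume n23: "\<not> (v ! 2 = 2 \<or> v ! 2 = 3)"
  obtain a b where ab: "a \<noteq> b" "factor (a # v)" "factor (b # v)"
    using assms(1) unfolding left_special_def by blast
  have key: "c = F (v ! 0) (v ! 1)" if fc: "factor (c # v)" for c
  proof -
    obtain m where m: "Oc (c # v) m" using fc factor_Oc by blast
    have 0: "u m = c" using Oc_nth[OF m, of 0] by simp
    have 1: "u (m + 1) = v ! 0" using Oc_nth[OF m, of 1] assms(2) by (cases v) auto
    have 2: "u (m + 2) = v ! 1" using Oc_nth[OF m, of 2] assms(2) by (simp add: nth_Cons')
    have 3: "u (m + 3) = v ! 2" using Oc_nth[OF m, of 3] assms(2) by (simp add: nth_Cons')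
    have "u m = F (u (m + 1)) (u (m + 2))" using F_lemma[of m] n23 unfolding 3 by blast
    then show ?thesis unfolding 0 1 2 .
  qed
  show False using key[OF ab(2)] key[OF ab(3)] ab(1) by simp
qed

lemma RS_lemma:
  assumes "right_special v" "length v \<ge> 3"
  shows "v ! (length v - 3) = 2 \<or> v ! (length v - 3) = 3"
proof (rule ccontr)
  assume n23: "\<not> (v ! (length v - 3) = 2 \<or> v ! (length v - 3) = 3)"
  obtain a b where ab: "a \<noteq> b" "factor (v @ [a])" "factor (v @ [b])"
    using assms(1) unfolding right_special_def by blast
  have key: "c = G (v ! (length v - 3)) (v ! (length v - 2)) (v ! (length v - 1))" if fc: "factor (v @ [c])" for c
  proof -
    obtain m where m: "Oc (v @ [c]) m" using fc factor_Oc by blast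
    define j where "j = m + (length v - 3)"
    have l1: "length v - 3 < length v" "length v - 2 < length v" "length v - 1 < length v"
      "length v - 3 + 1 = length v - 2" "length v - 3 + 2 = length v - 1" "length v - 3 + 3 = length v"
      using assms(2) by auto
    have "u (j + 3) = c" using Oc_nth[OF m, of "length v"] l1 unfolding j_def
      by (simp only: add.assoc) simp
    moreover have "u j = v ! (length v - 3)" using Oc_nth[OF m, of "length v - 3"] l1
      unfolding j_def by (simp add: nth_append)
    moreover have "u (j+1) = v ! (length v - 2)" using Oc_nth[OF m, of "length v - 2"] l1
      unfolding j_def by (simp only: add.assoc) (simp add: nth_append)
    moreover have "u (j+2) = v ! (length v - 1)" using Oc_nth[OF m, of "length v - 1"] l1
      unfolding j_def by (simp only: add.assoc) (simp add: nth_append)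
    ultimately show ?thesis using G_lemma[of j] n23 by simp
  qed
  show False using key[OF ab(2)] key[OF ab(3)] ab(1) by simp
qed

lemma map_u_block: "map u [pos k..<pos k + len (u k)] = phi (u k)"
  by (rule nth_equalityI) (simp_all add: u_pos)

lemma BLK: "j \<le> k \<Longrightarrow> map u [pos j..<pos k] = phiw (map u [j..<k])"
proof (induction k rule: dec_induct)
  case base then show ?case by simp
next
  case (step k)
  have "map u [pos j..<pos (Suc k)] = map u [pos j..<pos k] @ map u [pos k..<pos k + len (u k)]"
    using step(1) by (simp add: pos_Suc flip: map_append upt_add_eq_append)
  then show ?case using step by (simp add: map_u_block)
qed

lemma pos_phiw: "j \<le> k \<Longrightarrow> pos k = pos j + length (phiw (map u [j..<k]))"
proof -
  assume jk: "j \<le> k"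
  have "length (map u [pos j..<pos k]) = pos k - pos j" by simp
  then have "pos k - pos j = length (phiw (map u [j..<k]))" using BLK[OF jk] by simp
  moreover have "pos j \<le> pos k" using jk by simp
  ultimately show ?thesis by linarith
qed

lemma u_pos_pred: "k \<ge> 1 \<Longrightarrow> u (pos k - 1) = u (k - 1)"
proof -
  assume "k \<ge> 1"
  then obtain m where k: "k = Suc m" by (cases k) auto
  have "pos k - 1 = pos m + (len (u m) - 1)" using len_phi[of "u m"] by (simp add: k pos_Suc)
  then show ?thesis using u_pos_last[of m] k by simp
qed

lemma R_triples': "(u k, u (Suc k), u (Suc (Suc k))) \<in> set triples"
  using triple[of k] R_triples by blast

lemma phi1[simp]: "phi 1 = [1,0,2,1]" using phi_simps(2) by simp
lemma pos5_aux: "R c d \<Longrightarrow> (phi c @ phi d @ x) ! 5 = c"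
  unfolding R_def by (elim disjE conjE) simp_all

lemma P5_aux: "R b c \<Longrightarrow> R c d \<Longrightarrow> take 5 (phi c @ phi d @ x) = p b"
  unfolding R_def by (elim disjE conjE) (simp_all add: p_def)

lemma u_pos5: "u (pos k + 5) = u k"
proof -
  have "u (pos k + 5) = blk3 k ! 5" using u_blk3[of 5 k] length_blk3[of k] by simp
  then show ?thesis using triple[of k] unfolding blk3_def by (simp add: pos5_aux)
qed

lemma P5: "k \<ge> 1 \<Longrightarrow> map u [pos k..<pos k + 5] = p (u (k - 1))"
proof -
  assume "k \<ge> 1"
  then obtain m where k: "k = Suc m" by (cases k) auto
  have "map u [pos k..<pos k + 5] = take 5 (drop 0 (blk3 k))"
    using window[of 0 k "pos k" 5] by simp
  moreover have "R (u m) (u k)" using rule_u[of m] k by simp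
  ultimately show ?thesis unfolding blk3_def using k P5_aux triple[of k] by simp
qed

lemma last_phi': "c \<le> 3 \<Longrightarrow> last (phi c) = c"
  using c4[of c] by auto

lemma phiw_inj: "\<forall>c\<in>set x. c \<le> 3 \<Longrightarrow> \<forall>c\<in>set y. c \<le> 3 \<Longrightarrow> phiw x = phiw y \<Longrightarrow> x = y"
proof (induction x arbitrary: y rule: rev_induct)
  case Nil then show ?case by (cases y rule: rev_cases) auto
next
  case (snoc a x)
  show ?case
  proof (cases y rule: rev_cases)
    case Nil then show ?thesis using snoc by simp
  next
    case (snoc y' b)
    have e: "phiw x @ phi a = phiw y' @ phi b" using snoc.prems snoc by simp
    have "last (phi a) = last (phi b)" using arg_cong[OF e, of last] by simp
    then have ab: "a = b" using snoc.prems snoc last_phi' by simp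
    then have "phiw x = phiw y'" using e by simp
    then have "x = y'" using snoc.IH snoc.prems snoc by simp
    then show ?thesis using ab snoc by simp
  qed
qed

definition V :: "nat list \<Rightarrow> nat list" where "V w = phiw w @ p (last w)"

lemma Oc_block: "Oc w j \<Longrightarrow> map u [j..<j + length w] = w" by (simp add: Oc_map)

lemma length_V: "length (V w) = length (phiw w) + 5" by (simp add: V_def p_def)

lemma pos_Oc: "Oc w j \<Longrightarrow> pos (j + length w) = pos j + length (phiw w)"
  using pos_phiw[of j "j + length w"] Oc_block[of w j] by simp

lemma from_w:
  assumes "w \<noteq> []" "Oc w j"
  shows "Oc (V w) (pos j)"
proof -
  define k where "k = j + length w"
  have mw: "map u [j..<k] = w" using Oc_block[OF assms(2)] k_def by simp
  have pk: "pos k = pos j + length (phiw w)" using pos_Oc[OF assms(2)] k_def by simp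
  have k1: "k \<ge> 1" using assms(1) k_def by (cases w) auto
  have jk: "j < k" using assms(1) k_def by (cases w) auto
  have lw: "last w = u (k - 1)"
  proof -
    have ne: "[j..<k] \<noteq> []" using jk by simp
    have "last w = u (last [j..<k])" unfolding mw[symmetric] using ne by (simp add: last_map)
    also have "last [j..<k] = k - 1" using jk by (simp add: last_upt)
    finally show ?thesis .
  qed
  have "map u [pos j..<pos j + length (V w)] = map u [pos j..<pos k] @ map u [pos k..<pos k + 5]"
    unfolding length_V pk using upt_add_eq_append[of "pos j" "pos j + length (phiw w)" 5]
    by (simp add: add.assoc)
  also have "\<dots> = phiw w @ p (last w)"
    using BLK[of j k] mw P5[OF k1] lw k_def by simp
  finally show ?thesis unfolding Oc_map V_def .
qed

lemma phi_2: "phi c ! 2 = 2 \<or> phi c ! 2 = 3" by (simp add: phi.simps)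
lemma p_2: "p a ! 2 = 2 \<or> p a ! 2 = 3" by (simp add: p_def)

lemma to_w:
  assumes "w \<noteq> []" "\<forall>c\<in>set w. c \<le> 3" "Oc (V w) x"
  shows "\<exists>j. x = pos j \<and> Oc w j"
proof -
  have lV: "length (V w) = length (phiw w) + 5" by (rule length_V)
  have lp: "length (phiw w) \<ge> 3" using assms(1) len_phi(1)[of "hd w"] by (cases w) auto
  have "V w ! 2 = phiw w ! 2" using lp by (simp add: V_def nth_append)
  also have "\<dots> = phi (hd w) ! 2" using assms(1) len_phi(1)[of "hd w"] by (cases w) (auto simp: nth_append)
  finally have "V w ! 2 = 2 \<or> V w ! 2 = 3" using phi_2 by simp
  moreover have "u (x + 2) = V w ! 2" using Oc_nth[OF assms(3), of 2] lV by simp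
  ultimately obtain j where j: "x + 2 = pos j + 2" using u23_iff by metis
  have "V w ! (length (phiw w) + 2) = p (last w) ! 2" by (simp add: V_def nth_append)
  then have "V w ! (length (phiw w) + 2) = 2 \<or> V w ! (length (phiw w) + 2) = 3" using p_2 by simp
  moreover have "u (x + (length (phiw w) + 2)) = V w ! (length (phiw w) + 2)"
    using Oc_nth[OF assms(3), of "length (phiw w) + 2"] lV by simp
  ultimately obtain k where k: "x + (length (phiw w) + 2) = pos k + 2" using u23_iff by metis
  have xj: "x = pos j" using j by simp
  have pk: "pos k = pos j + length (phiw w)" using k xj by simp
  then have jk: "j \<le> k" using pos_le_iff by (metis le_add1)
  have "map u [pos j..<pos j + length (V w)] = V w" using assms(3) xj by (simp add: Oc_map)
  then have "take (length (phiw w)) (map u [pos j..<pos j + length (V w)]) = phiw w"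
    by (simp add: V_def)
  then have "map u [pos j..<pos k] = phiw w" using pk lV by (simp add: take_map take_upt)
  then have "phiw (map u [j..<k]) = phiw w" using BLK[OF jk] by simp
  then have mw: "map u [j..<k] = w" using phiw_inj[of "map u [j..<k]" w] assms(2) u_le3 by auto
  then have "k = j + length w" using jk by (metis add_diff_inverse_nat length_map length_upt not_le le_less_trans less_irrefl_nat nat_le_linear)
  then have "Oc w j" using mw by (simp add: Oc_map)
  then show ?thesis using xj by blast
qed

lemma Oc_V_iff:
  assumes "w \<noteq> []" "\<forall>c\<in>set w. c \<le> 3"
  shows "Oc (V w) x \<longleftrightarrow> (\<exists>j. x = pos j \<and> Oc w j)"
  using to_w[OF assms] from_w[OF assms(1)] by blast

lemma Oc_Cons: "Oc (a # v) m \<longleftrightarrow> u m = a \<and> Oc v (Suc m)"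
  unfolding Oc_def by (auto simp: nth_Cons' less_Suc_eq_0_disj)

lemma Oc_snoc: "Oc (v @ [a]) m \<longleftrightarrow> Oc v m \<and> u (m + length v) = a"
  unfolding Oc_def by (auto simp: nth_append less_Suc_eq)

lemma bis_decomp:
  assumes "factor v" "bispecial v" "length v \<ge> 5"
  shows "\<exists>j k. 1 \<le> j \<and> j \<le> k \<and> v = phiw (map u [j..<k]) @ p (u (k - 1))"
proof -
  have ls: "left_special v" and rs: "right_special v" using assms(2) by (auto simp: bispecial_def)
  have v2: "v ! 2 = 2 \<or> v ! 2 = 3" using LS_lemma[OF ls] assms(3) by simp
  have v3: "v ! (length v - 3) = 2 \<or> v ! (length v - 3) = 3" using RS_lemma[OF rs] assms(3) by simp
  obtain a where "factor (a # v)" using ls unfolding left_special_def by blast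
  then obtain m where "Oc (a # v) m" using factor_Oc by blast
  then have oc: "Oc v (Suc m)" using Oc_Cons by blast
  have "u (Suc m + 2) = v ! 2" using Oc_nth[OF oc, of 2] assms(3) by simp
  then obtain j where j: "Suc m + 2 = pos j + 2" using v2 u23_iff by metis
  have "u (Suc m + (length v - 3)) = v ! (length v - 3)" using Oc_nth[OF oc, of "length v - 3"] assms(3) by simp
  then obtain k where k: "Suc m + (length v - 3) = pos k + 2" using v3 u23_iff by metis
  have pj: "pos j = Suc m" using j by simp
  have j1: "1 \<le> j" using pj by (cases j) auto
  have pk: "pos k = pos j + (length v - 5)" using k pj assms(3) by simp
  have jk: "j \<le> k" using pk pos_le_iff by (metis le_add1)
  have k1: "1 \<le> k" using j1 jk by simp
  have "map u [pos j..<pos j + length v] = v" using oc pj by (simp add: Oc_map)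
  moreover have "[pos j..<pos j + length v] = [pos j..<pos k] @ [pos k..<pos k + 5]"
    using pk assms(3) upt_add_eq_append[of "pos j" "pos k" 5] by simp
  ultimately have "v = map u [pos j..<pos k] @ map u [pos k..<pos k + 5]" by simp
  also have "\<dots> = phiw (map u [j..<k]) @ p (u (k - 1))" using BLK[OF jk] P5[OF k1] by simp
  finally show ?thesis using j1 jk by blast
qed

lemma bis_w:
  assumes "w \<noteq> []" "factor w" "bispecial (V w)"
  shows "bispecial w"
proof -
  have w3: "\<forall>c\<in>set w. c \<le> 3" using assms(2) factor_Oc Oc_set by blast
  have ls: "left_special (V w)" and rs: "right_special (V w)" using assms(3) by (auto simp: bispecial_def)
  have L: "factor (a # w)" if fa: "factor (a # V w)" for a
  proof -
    obtain m where "Oc (a # V w) m" using fa factor_Oc by blast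
    then have um: "u m = a" and oc: "Oc (V w) (Suc m)" using Oc_Cons by auto
    obtain j where j: "Suc m = pos j" "Oc w j" using to_w[OF assms(1) w3 oc] by blast
    have j1: "j \<ge> 1" using j(1) by (cases j) auto
    have "pos j - 1 = m" using j(1) by simp
    then have "u (j - 1) = a" using u_pos_pred[OF j1] um by simp
    then have "Oc (a # w) (j - 1)" using j(2) j1 Oc_Cons by simp
    then show ?thesis using factor_Oc by blast
  qed
  have R: "factor (w @ [a])" if fa: "factor (V w @ [a])" for a
  proof -
    obtain m where "Oc (V w @ [a]) m" using fa factor_Oc by blast
    then have oc: "Oc (V w) m" and um: "u (m + length (V w)) = a" using Oc_snoc by auto
    obtain j where j: "m = pos j" "Oc w j" using to_w[OF assms(1) w3 oc] by blast
    have "m + length (V w) = pos (j + length w) + 5" using pos_Oc[OF j(2)] j(1) length_V[of w] by simp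
    then have "u (j + length w) = a" using um u_pos5 by simp
    then have "Oc (w @ [a]) j" using j(2) Oc_snoc by simp
    then show ?thesis using factor_Oc by blast
  qed
  show ?thesis using ls rs L R unfolding bispecial_def left_special_def right_special_def by blast
qed

lemma length_p[simp]: "length (p a) = 5" by (simp add: p_def)

lemma short_bis:
  assumes "factor w" "bispecial w" "w \<noteq> []" "length w \<le> 5"
  shows "w = [0] \<or> w = [1] \<or> w = [0,1] \<or> w = [1,0] \<or> w = [0,1,3,0,1] \<or> w = [1,0,2,1,0]"
proof -
  have ls: "left_special w" and rs: "right_special w" using assms(2) by (auto simp: bispecial_def)
  obtain m where oc: "Oc w m" using assms(1) factor_Oc by blast
  consider "length w = 1" | "length w = 2" | "length w = 3" | "length w = 4" | "length w = 5"
  proof -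
    have "length w \<noteq> 0" using assms(3) by simp
    then have "length w = 1 \<or> length w = 2 \<or> length w = 3 \<or> length w = 4 \<or> length w = 5"
      using assms(4) by arith
    then show ?thesis using that by blast
  qed
  then show ?thesis
  proof cases
    case 1
    then obtain x where x: "w = [x]" by (cases w) auto
    obtain a b where ab: "a \<noteq> b" "factor [a, x]" "factor [b, x]" using ls x unfolding left_special_def by blast
    have "R c x" if fc: "factor [c, x]" for c
    proof -
      obtain i where "Oc [c, x] i" using fc factor_Oc by blast
      then have "u i = c" "u (Suc i) = x" using Oc_nth[of "[c,x]" i 0] Oc_nth[of "[c,x]" i 1] by auto
      then show ?thesis using rule_u[of i] by simp
    qed
    then have "R a x" "R b x" using ab by auto
    then have "x = 0 \<or> x = 1" using ab(1) unfolding R_def by auto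
    then show ?thesis using x by auto
  next
    case 2
    then obtain x y where x: "w = [x, y]" by (cases w rule: list.exhaust[of _ "_"]) (auto simp: length_Suc_conv)
    obtain a b where ab: "a \<noteq> b" "factor [a, x, y]" "factor [b, x, y]" using ls x unfolding left_special_def by blast
    have "[c, x, y] \<in> set (WL 3)" if fc: "factor [c, x, y]" for c
    proof -
      obtain i where oi: "Oc [c, x, y] i" using fc factor_Oc by blast
      have e: "map u [i..<i + length [c,x,y]] = [c,x,y]" using oi by (simp only: Oc_map)
      have "length [c,x,y] = 3" by simp
      moreover have "map u [i..<i+3] \<in> set (WL 3)" by (rule win_WL) simp
      ultimately show ?thesis using e by metis
    qed
    then have "[a, x, y] \<in> set (WL 3)" "[b, x, y] \<in> set (WL 3)" using ab by auto
    then have "(x = 0 \<and> y = 1) \<or> (x = 1 \<and> y = 0)" using ab(1) unfolding WL3 by auto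
    then show ?thesis using x by auto
  next
    case 3
    have "w ! 2 = 2 \<or> w ! 2 = 3" using LS_lemma[OF ls] 3 by simp
    moreover have "w ! 0 = 2 \<or> w ! 0 = 3" using RS_lemma[OF rs] 3 by simp
    moreover have "u m = w ! 0" "u (m + 2) = w ! 2" using Oc_nth[OF oc, of 0] Oc_nth[OF oc, of 2] 3 by auto
    ultimately show ?thesis using spacing[of m] by auto
  next
    case 4
    have "w ! 2 = 2 \<or> w ! 2 = 3" using LS_lemma[OF ls] 4 by simp
    moreover have "w ! 1 = 2 \<or> w ! 1 = 3" using RS_lemma[OF rs] 4 by simp
    moreover have "u (m + 1) = w ! 1" "u (m + 2) = w ! 2" using Oc_nth[OF oc, of 1] Oc_nth[OF oc, of 2] 4 by auto
    ultimately show ?thesis using spacing[of "m + 1"] by (auto simp: add.assoc)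
  next
    case 5
    obtain j k where jk: "1 \<le> j" "j \<le> k" "w = phiw (map u [j..<k]) @ p (u (k - 1))"
      using bis_decomp[OF assms(1,2)] 5 by auto
    have "length (phiw (map u [j..<k])) = 0" using 5 arg_cong[OF jk(3), of length] by simp
    then have "w = p (u (k - 1))" using jk(3) by simp
    then show ?thesis by (simp add: p_def)
  qed
qed

lemma sum_ivl_bound:
  fixes F :: "nat \<Rightarrow> real"
  assumes "\<And>k. \<bar>F k\<bar> \<le> B"
  shows "\<bar>sum F {m..<n}\<bar> \<le> real (n - m) * B"
proof -
  have "\<bar>sum F {m..<n}\<bar> \<le> sum (\<lambda>k. \<bar>F k\<bar>) {m..<n}" by (rule sum_abs)
  also have "\<dots> \<le> real (card {m..<n}) * B" by (rule sum_bounded_above) (use assms in auto)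
  finally show ?thesis by simp
qed

lemma sum_cut:
  fixes F :: "nat \<Rightarrow> real"
  assumes "a \<le> b"
  shows "sum F {pos a..<pos b} = (\<Sum>j\<in>{a..<b}. \<Sum>t<len (u j). F (pos j + t))"
  using assms
proof (induction b rule: dec_induct)
  case base then show ?case by simp
next
  case (step b)
  have "sum F {pos a..<pos (Suc b)} = sum F {pos a..<pos b} + sum F {pos b..<pos (Suc b)}"
    using step(1) by (simp add: sum.atLeastLessThan_concat)
  moreover have "sum F {pos b..<pos (Suc b)} = (\<Sum>t<len (u b). F (pos b + t))"
  proof -
    have "sum F {pos b..<pos (Suc b)} = sum F {0 + pos b..<len (u b) + pos b}" by (simp add: pos_Suc add.commute)
    also have "\<dots> = sum (\<lambda>t. F (t + pos b)) {0..<len (u b)}" by (rule sum.shift_bounds_nat_ivl)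
    also have "\<dots> = (\<Sum>t<len (u b). F (pos b + t))" by (simp add: lessThan_atLeast0 add.commute)
    finally show ?thesis .
  qed
  ultimately show ?case using step by simp
qed

definition fc :: "nat \<Rightarrow> nat" where "fc i = (LEAST j. i \<le> pos j)"

lemma fc1: "i \<le> pos (fc i)"
proof -
  have "i \<le> pos i" using pos_ge[of i] by simp
  then show ?thesis unfolding fc_def by (rule LeastI)
qed

lemma fc2: "pos (fc i) \<le> i + 3"
proof (cases "fc i")
  case 0 then show ?thesis by simp
next
  case (Suc m)
  have "\<not> i \<le> pos m" using not_less_Least[of m "\<lambda>j. i \<le> pos j"] Suc unfolding fc_def by simp
  then show ?thesis using Suc len_phi(2)[of "u m"] by (simp add: pos_Suc)
qed

lemma fc_mono: "i \<le> i' \<Longrightarrow> fc i \<le> fc i'"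
  unfolding fc_def by (rule Least_le) (use fc1[of i'] in \<open>simp add: fc_def\<close>)

lemma pos_diff_ge: "a \<le> b \<Longrightarrow> pos a + 3 * (b - a) \<le> pos b"
proof (induction b rule: dec_induct)
  case base then show ?case by simp
next
  case (step b) then show ?case using pos_Suc_gt[of b] by (simp add: Suc_diff_le)
qed

lemma pos_diff_le: "a \<le> b \<Longrightarrow> pos b \<le> pos a + 4 * (b - a)"
proof (induction b rule: dec_induct)
  case base then show ?case by simp
next
  case (step b) then show ?case using len_phi(2)[of "u b"] by (simp add: pos_Suc Suc_diff_le)
qed

lemma window_cut:
  fixes F :: "nat \<Rightarrow> real"
  assumes "\<And>k. \<bar>F k\<bar> \<le> B"
  shows "\<bar>sum F {i..<i+L} - sum F {pos (fc i)..<pos (fc (i+L))}\<bar> \<le> 6 * B"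
proof -
  let ?a = "pos (fc i)" and ?b = "pos (fc (i+L))"
  have B0: "0 \<le> B" using assms[of 0] by simp
  have h1: "i \<le> ?a" "?a \<le> i + 3" "i + L \<le> ?b" "?b \<le> i + L + 3" using fc1 fc2 by auto
  have h2: "?a \<le> ?b" using fc_mono[of i "i+L"] by simp
  have e1: "sum F {i..<?b} = sum F {i..<?a} + sum F {?a..<?b}"
    using h1 h2 by (simp add: sum.atLeastLessThan_concat)
  have e2: "sum F {i..<?b} = sum F {i..<i+L} + sum F {i+L..<?b}"
    using h1 by (simp add: sum.atLeastLessThan_concat)
  have r1: "real (?a - i) \<le> 3" "real (?b - (i + L)) \<le> 3" using h1 by linarith+
  have b1: "\<bar>sum F {i..<?a}\<bar> \<le> 3 * B"
    using sum_ivl_bound[where F=F and B=B and m=i and n="?a", OF assms] mult_right_mono[OF r1(1) B0] by linarith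
  have b2: "\<bar>sum F {i+L..<?b}\<bar> \<le> 3 * B"
    using sum_ivl_bound[where F=F and B=B and m="i+L" and n="?b", OF assms] mult_right_mono[OF r1(2) B0] by linarith
  show ?thesis using e1 e2 b1 b2 by linarith
qed

definition Q :: "(nat \<Rightarrow> real) \<Rightarrow> nat \<Rightarrow> nat \<Rightarrow> real" where
  "Q q i L = (\<Sum>k\<in>{i..<i+L}. q (u k))"

definition qphi :: "(nat \<Rightarrow> real) \<Rightarrow> nat \<Rightarrow> real" where
  "qphi q c = (\<Sum>t<len c. q (phi c ! t))"

lemma Q_rec:
  assumes "\<And>c. \<bar>q c\<bar> \<le> B"
  shows "\<bar>Q q i L - Q (qphi q) (fc i) (fc (i+L) - fc i)\<bar> \<le> 6 * B"
    and "3 * (fc (i+L) - fc i) \<le> L + 3"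
proof -
  let ?a = "fc i" and ?b = "fc (i+L)"
  have ab: "?a \<le> ?b" by (rule fc_mono) simp
  have "sum (\<lambda>k. q (u k)) {pos ?a..<pos ?b} = (\<Sum>j\<in>{?a..<?b}. \<Sum>t<len (u j). q (u (pos j + t)))"
    by (rule sum_cut[OF ab])
  also have "\<dots> = (\<Sum>j\<in>{?a..<?b}. qphi q (u j))"
    by (rule sum.cong) (simp_all add: qphi_def u_pos)
  also have "\<dots> = Q (qphi q) ?a (?b - ?a)" using ab by (simp add: Q_def)
  finally have e: "sum (\<lambda>k. q (u k)) {pos ?a..<pos ?b} = Q (qphi q) ?a (?b - ?a)" .
  show "\<bar>Q q i L - Q (qphi q) ?a (?b - ?a)\<bar> \<le> 6 * B"
    using window_cut[of "\<lambda>k. q (u k)" B i L] assms e by (simp add: Q_def)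
  show "3 * (?b - ?a) \<le> L + 3" using pos_diff_ge[OF ab] fc1[of i] fc2[of "i+L"] by linarith
qed

lemma sqrt_bound:
  fixes Q :: "nat \<Rightarrow> nat \<Rightarrow> real"
  assumes C: "\<And>i L. \<bar>Q i L\<bar> \<le> C * real L" and pos: "C \<ge> 0" "ca \<ge> 0" "cb \<ge> 0"
    and rec: "\<And>i L. \<exists>i' L'. 3 * L' \<le> L + 3 \<and> \<bar>Q i L\<bar> \<le> \<bar>Q i' L'\<bar> + ca * sqrt (real L') + cb"
  shows "\<exists>K. \<forall>i L. \<bar>Q i L\<bar> \<le> K * sqrt (real L)"
proof -
  define K where "K = 3 * C + 3 * (ca + cb)"
  have K0: "K \<ge> 0" using pos by (simp add: K_def)
  have main: "\<forall>i. \<bar>Q i L\<bar> \<le> K * sqrt (real L)" for L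
  proof (induction L rule: less_induct)
    case (less L)
    show ?case
    proof
      fix i
      show "\<bar>Q i L\<bar> \<le> K * sqrt (real L)"
      proof (cases "L \<le> 9")
        case True
        have s: "sqrt (real L) \<le> 3" using True by (simp add: real_sqrt_le_iff[of _ 9, simplified])
        have "real L \<le> 3 * sqrt (real L)" using mult_right_mono[OF s, of "sqrt (real L)"] by simp
        then have "C * real L \<le> C * (3 * sqrt (real L))" using pos(1) by (simp add: mult_left_mono)
        also have "\<dots> \<le> K * sqrt (real L)" using pos by (simp add: K_def algebra_simps)
        finally show ?thesis using C[of i L] by linarith
      next
        case False
        obtain i' L' where r: "3 * L' \<le> L + 3" "\<bar>Q i L\<bar> \<le> \<bar>Q i' L'\<bar> + ca * sqrt (real L') + cb"
          using rec by blast
        have LL: "L' < L" using r(1) False by linarith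
        have IH: "\<bar>Q i' L'\<bar> \<le> K * sqrt (real L')" using less.IH[OF LL] by blast
        have "9 * real L' \<le> 4 * real L" using r(1) False by linarith
        then have "real L' \<le> (2/3)^2 * real L" by (simp add: power2_eq_square)
        then have s1: "sqrt (real L') \<le> (2/3) * sqrt (real L)"
          by (metis real_sqrt_le_mono real_sqrt_mult real_sqrt_pow2_iff real_sqrt_power zero_le_divide_iff zero_le_numeral power2_eq_square real_sqrt_abs abs_of_nonneg)
        have s2: "sqrt (real L') \<le> sqrt (real L)" using LL by simp
        have s3: "1 \<le> sqrt (real L)" using False by simp
        have "\<bar>Q i L\<bar> \<le> K * ((2/3) * sqrt (real L)) + ca * sqrt (real L) + cb * sqrt (real L)"
          using r(2) IH mult_left_mono[OF s1 K0] mult_left_mono[OF s2 pos(2)] mult_left_mono[OF s3 pos(3)]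
          by linarith
        also have "\<dots> = (2/3 * K + ca + cb) * sqrt (real L)" by (simp add: algebra_simps)
        also have "\<dots> \<le> K * sqrt (real L)"
          by (rule mult_right_mono) (use pos in \<open>simp_all add: K_def\<close>)
        finally show ?thesis .
      qed
    qed
  qed
  then show ?thesis by blast
qed

lemma qphi_list: "qphi q c = sum_list (map q (phi c))"
  unfolding qphi_def by (simp add: sum_list_sum_nth atLeast0LessThan)

definition q1 :: "nat \<Rightarrow> real" where "q1 c = (if c = 0 then 1 else if c = 1 then -1 else 0)"
definition q2 :: "nat \<Rightarrow> real" where "q2 c = (if c = 2 then 1 else if c = 3 then -1 else 0)"
definition qh :: "nat \<Rightarrow> real" where "qh c = (if c \<le> 1 then 1 else - (1 + sqrt 3))"

lemma sq3: "sqrt 3 * sqrt 3 = (3::real)" by simp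

lemma qphi_q1: "c \<le> 3 \<Longrightarrow> qphi q1 c = q1 c"
  using c4[of c] by (auto simp: qphi_list q1_def)
lemma qphi_q2: "c \<le> 3 \<Longrightarrow> qphi q2 c = q2 c - q1 c"
  using c4[of c] by (auto simp: qphi_list q1_def q2_def)
lemma qphi_qh: "c \<le> 3 \<Longrightarrow> qphi qh c = (2 - sqrt 3) * qh c"
  using c4[of c] by (auto simp: qphi_list qh_def algebra_simps)

lemma Q_cong: "(\<And>c. c \<le> 3 \<Longrightarrow> q c = q' c) \<Longrightarrow> Q q i L = Q q' i L"
  unfolding Q_def by (rule sum.cong) (simp_all add: u_le3)

lemma Q_diff: "Q (\<lambda>c. q c - q' c) i L = Q q i L - Q q' i L"
  unfolding Q_def by (simp add: sum_subtractf)
lemma Q_scale: "Q (\<lambda>c. k * q c) i L = k * Q q i L"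
  unfolding Q_def by (simp add: sum_distrib_left)

lemma Q_trivial: "(\<And>c. \<bar>q c\<bar> \<le> B) \<Longrightarrow> \<bar>Q q i L\<bar> \<le> B * real L"
  unfolding Q_def using sum_ivl_bound[of "\<lambda>k. q (u k)" B i "i+L"] by (simp add: mult.commute)

lemma bound_q1: "\<exists>K. \<forall>i L. \<bar>Q q1 i L\<bar> \<le> K * sqrt (real L)"
proof (rule sqrt_bound[where C=1 and ca=0 and cb=6])
  have b: "\<And>c. \<bar>q1 c\<bar> \<le> 1" by (simp add: q1_def)
  show "\<bar>Q q1 i L\<bar> \<le> 1 * real L" for i L using Q_trivial[OF b] by simp
  show "\<exists>i' L'. 3 * L' \<le> L + 3 \<and> \<bar>Q q1 i L\<bar> \<le> \<bar>Q q1 i' L'\<bar> + 0 * sqrt (real L') + 6" for i L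
  proof (intro exI conjI)
    show "3 * (fc (i+L) - fc i) \<le> L + 3" using Q_rec(2)[OF b] .
    have "Q (qphi q1) (fc i) (fc (i+L) - fc i) = Q q1 (fc i) (fc (i+L) - fc i)"
      by (rule Q_cong) (simp add: qphi_q1)
    then show "\<bar>Q q1 i L\<bar> \<le> \<bar>Q q1 (fc i) (fc (i+L) - fc i)\<bar> + 0 * sqrt (real (fc (i+L) - fc i)) + 6"
      using Q_rec(1)[where q=q1 and B=1 and i=i and L=L, OF b] by simp
  qed
qed simp_all

lemma bound_q2: "\<exists>K. \<forall>i L. \<bar>Q q2 i L\<bar> \<le> K * sqrt (real L)"
proof -
  obtain K1 where K1: "\<And>i L. \<bar>Q q1 i L\<bar> \<le> K1 * sqrt (real L)" using bound_q1 by blast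
  have K1p: "K1 \<ge> 0" using K1[of 0 1] by simp
  show ?thesis
  proof (rule sqrt_bound[where C=1 and ca=K1 and cb=6])
    have b: "\<And>c. \<bar>q2 c\<bar> \<le> 1" by (simp add: q2_def)
    show "\<bar>Q q2 i L\<bar> \<le> 1 * real L" for i L using Q_trivial[OF b] by simp
    show "\<exists>i' L'. 3 * L' \<le> L + 3 \<and> \<bar>Q q2 i L\<bar> \<le> \<bar>Q q2 i' L'\<bar> + K1 * sqrt (real L') + 6" for i L
    proof (intro exI conjI)
      show "3 * (fc (i+L) - fc i) \<le> L + 3" using Q_rec(2)[OF b] .
      let ?a = "fc i" and ?L = "fc (i+L) - fc i"
      have "Q (qphi q2) ?a ?L = Q (\<lambda>c. q2 c - q1 c) ?a ?L"
        by (rule Q_cong) (simp add: qphi_q2)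
      also have "\<dots> = Q q2 ?a ?L - Q q1 ?a ?L" by (rule Q_diff)
      finally show "\<bar>Q q2 i L\<bar> \<le> \<bar>Q q2 ?a ?L\<bar> + K1 * sqrt (real ?L) + 6"
        using Q_rec(1)[where q=q2 and B=1 and i=i and L=L, OF b] K1[of ?a ?L] by linarith
    qed
  qed (use K1p in simp_all)
qed

lemma bound_qh: "\<exists>K. \<forall>i L. \<bar>Q qh i L\<bar> \<le> K * sqrt (real L)"
proof (rule sqrt_bound[where C="1 + sqrt 3" and ca=0 and cb="6 * (1 + sqrt 3)"])
  have b: "\<And>c. \<bar>qh c\<bar> \<le> 1 + sqrt 3" by (simp add: qh_def abs_if)
  show "\<bar>Q qh i L\<bar> \<le> (1 + sqrt 3) * real L" for i L using Q_trivial[OF b] by simp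
  show "\<exists>i' L'. 3 * L' \<le> L + 3 \<and> \<bar>Q qh i L\<bar> \<le> \<bar>Q qh i' L'\<bar> + 0 * sqrt (real L') + 6 * (1 + sqrt 3)" for i L
  proof (intro exI conjI)
    show "3 * (fc (i+L) - fc i) \<le> L + 3" using Q_rec(2)[OF b] .
    let ?a = "fc i" and ?L = "fc (i+L) - fc i"
    have "Q (qphi qh) ?a ?L = Q (\<lambda>c. (2 - sqrt 3) * qh c) ?a ?L"
      by (rule Q_cong) (simp add: qphi_qh)
    also have "\<dots> = (2 - sqrt 3) * Q qh ?a ?L" by (rule Q_scale)
    finally have e: "Q (qphi qh) ?a ?L = (2 - sqrt 3) * Q qh ?a ?L" .
    have s3: "sqrt 3 \<le> 2" by (simp add: real_sqrt_le_iff[of 3 4, simplified])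
    have s3': "1 \<le> sqrt 3" by simp
    have "\<bar>(2 - sqrt 3) * Q qh ?a ?L\<bar> \<le> \<bar>Q qh ?a ?L\<bar>"
      using s3 s3' by (simp add: abs_mult mult_left_le_one_le)
    then show "\<bar>Q qh i L\<bar> \<le> \<bar>Q qh ?a ?L\<bar> + 0 * sqrt (real ?L) + 6 * (1 + sqrt 3)"
      using Q_rec(1)[where q=qh and B="1 + sqrt 3" and i=i and L=L, OF b] e by linarith
  qed
qed simp_all

definition mu :: real where "mu = 2 - sqrt 3"

definition mean :: "(nat \<Rightarrow> real) \<Rightarrow> real" where
  "mean q = (q 0 + q 1) * (1 - mu) / 2 + (q 2 + q 3) * mu / 2"

lemma lam_pos: "lam > 0" by (simp add: lam_def add_pos_nonneg)
lemma mu_lam: "mu = 1 / lam"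
proof -
  have "(2 - sqrt 3) * (2 + sqrt 3) = 1" by (simp add: algebra_simps)
  then show ?thesis using lam_pos unfolding mu_def lam_def by (simp add: field_simps)
qed

lemma decomp_q:
  assumes "c \<le> 3"
  shows "q c = mean q + (q 0 - q 1) / 2 * q1 c + (q 2 - q 3) / 2 * q2 c
            + (q 0 + q 1 - q 2 - q 3) * mu / 2 * qh c"
proof -
  have key: "mu * (1 + sqrt 3) = 1 - mu" unfolding mu_def by (simp add: algebra_simps)
  consider "c = 0" | "c = 1" | "c = 2" | "c = 3" using c4[OF assms] by blast
  then show ?thesis
  proof cases
    case 1 then show ?thesis by (simp add: mean_def q1_def q2_def qh_def field_simps)
  next
    case 2 then show ?thesis by (simp add: mean_def q1_def q2_def qh_def field_simps)
  next
    case 3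
    have "(q 0 + q 1 - q 2 - q 3) * mu / 2 * qh 2 = - ((q 0 + q 1 - q 2 - q 3) / 2 * (mu * (1 + sqrt 3)))"
      by (simp add: qh_def field_simps)
    also have "\<dots> = - ((q 0 + q 1 - q 2 - q 3) / 2 * (1 - mu))" by (simp only: key)
    finally have e: "(q 0 + q 1 - q 2 - q 3) * mu / 2 * qh 2 = - ((q 0 + q 1 - q 2 - q 3) / 2 * (1 - mu))" .
    show ?thesis unfolding \<open>c = 2\<close> e by (simp add: mean_def q1_def q2_def field_simps)
  next
    case 4
    have "(q 0 + q 1 - q 2 - q 3) * mu / 2 * qh 3 = - ((q 0 + q 1 - q 2 - q 3) / 2 * (mu * (1 + sqrt 3)))"
      by (simp add: qh_def field_simps)
    also have "\<dots> = - ((q 0 + q 1 - q 2 - q 3) / 2 * (1 - mu))" by (simp only: key)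
    finally have e: "(q 0 + q 1 - q 2 - q 3) * mu / 2 * qh 3 = - ((q 0 + q 1 - q 2 - q 3) / 2 * (1 - mu))" .
    show ?thesis unfolding \<open>c = 3\<close> e by (simp add: mean_def q1_def q2_def field_simps)
  qed
qed

lemma Q_lin: "Q (\<lambda>c. a + b * f c + d * g c + e * h c) i L = a * real L + b * Q f i L + d * Q g i L + e * Q h i L"
  unfolding Q_def by (simp add: sum.distrib sum_distrib_left)

lemma Q_mean_bound: "\<exists>K. \<forall>i L. \<bar>Q q i L - mean q * real L\<bar> \<le> K * sqrt (real L)"
proof -
  obtain K1 where K1: "\<And>i L. \<bar>Q q1 i L\<bar> \<le> K1 * sqrt (real L)" using bound_q1 by blast
  obtain K2 where K2: "\<And>i L. \<bar>Q q2 i L\<bar> \<le> K2 * sqrt (real L)" using bound_q2 by blast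
  obtain K3 where K3: "\<And>i L. \<bar>Q qh i L\<bar> \<le> K3 * sqrt (real L)" using bound_qh by blast
  define b1 where "b1 = (q 0 - q 1) / 2"
  define b2 where "b2 = (q 2 - q 3) / 2"
  define g where "g = (q 0 + q 1 - q 2 - q 3) * mu / 2"
  show ?thesis
  proof (intro exI allI)
    fix i L
    have "Q q i L = Q (\<lambda>c. mean q + b1 * q1 c + b2 * q2 c + g * qh c) i L"
      by (rule Q_cong) (unfold b1_def b2_def g_def, erule decomp_q)
    also have "\<dots> = mean q * real L + b1 * Q q1 i L + b2 * Q q2 i L + g * Q qh i L" by (rule Q_lin)
    finally have e: "Q q i L - mean q * real L = b1 * Q q1 i L + b2 * Q q2 i L + g * Q qh i L" by simp
    have a1: "\<bar>b1 * Q q1 i L\<bar> \<le> \<bar>b1\<bar> * (K1 * sqrt (real L))" unfolding abs_mult by (rule mult_left_mono[OF K1]) simp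
    have a2: "\<bar>b2 * Q q2 i L\<bar> \<le> \<bar>b2\<bar> * (K2 * sqrt (real L))" unfolding abs_mult by (rule mult_left_mono[OF K2]) simp
    have a3: "\<bar>g * Q qh i L\<bar> \<le> \<bar>g\<bar> * (K3 * sqrt (real L))" unfolding abs_mult by (rule mult_left_mono[OF K3]) simp
    show "\<bar>Q q i L - mean q * real L\<bar> \<le> (\<bar>b1\<bar> * K1 + \<bar>b2\<bar> * K2 + \<bar>g\<bar> * K3) * sqrt (real L)"
    proof -
      have t: "\<bar>b1 * Q q1 i L + b2 * Q q2 i L + g * Q qh i L\<bar> \<le> \<bar>b1 * Q q1 i L\<bar> + \<bar>b2 * Q q2 i L\<bar> + \<bar>g * Q qh i L\<bar>"
        by (meson abs_triangle_ineq add_mono order_trans order_refl)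
      have "(\<bar>b1\<bar> * K1 + \<bar>b2\<bar> * K2 + \<bar>g\<bar> * K3) * sqrt (real L)
          = \<bar>b1\<bar> * (K1 * sqrt (real L)) + \<bar>b2\<bar> * (K2 * sqrt (real L)) + \<bar>g\<bar> * (K3 * sqrt (real L))"
        by (simp add: algebra_simps)
      then show ?thesis unfolding e using t a1 a2 a3 by linarith
    qed
  qed
qed

definition seq_avg :: "(nat \<Rightarrow> real) \<Rightarrow> real \<Rightarrow> bool" where
  "seq_avg g r \<longleftrightarrow> (\<forall>I Ls. filterlim Ls at_top sequentially \<longrightarrow>
      ((\<lambda>n. (\<Sum>k\<in>{I n..<I n + Ls n}. g k) / real (Ls n)) \<longlongrightarrow> r) sequentially)"

lemma real_at_top: "filterlim Ls at_top sequentially \<Longrightarrow> filterlim (\<lambda>n. real (Ls n)) at_top sequentially"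
  by (rule filterlim_compose[OF filterlim_real_sequentially])

lemma ev_ge: "filterlim (Ls::nat\<Rightarrow>nat) at_top sequentially \<Longrightarrow> eventually (\<lambda>n. m \<le> Ls n) sequentially"
  unfolding filterlim_at_top by blast

lemma bound_to_avg:
  assumes "\<And>i L. \<bar>(\<Sum>k\<in>{i..<i+L}. g k) - r * real L\<bar> \<le> K * sqrt (real L)"
  shows "seq_avg g r"
  unfolding seq_avg_def
proof (intro allI impI)
  fix I Ls :: "nat \<Rightarrow> nat"
  assume L: "filterlim Ls at_top sequentially"
  have s: "filterlim (\<lambda>n. sqrt (real (Ls n))) at_infinity sequentially"
    by (rule filterlim_at_top_imp_at_infinity, rule filterlim_compose[OF sqrt_at_top real_at_top[OF L]])
  have z: "((\<lambda>n. K / sqrt (real (Ls n))) \<longlongrightarrow> 0) sequentially"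
    by (rule tendsto_divide_0[OF tendsto_const s])
  have "((\<lambda>n. (\<Sum>k\<in>{I n..<I n + Ls n}. g k) / real (Ls n) - r) \<longlongrightarrow> 0) sequentially"
  proof (rule tendsto_0_le[OF z, where K=1])
    show "eventually (\<lambda>n. norm ((\<Sum>k\<in>{I n..<I n + Ls n}. g k) / real (Ls n) - r)
            \<le> norm (K / sqrt (real (Ls n))) * 1) sequentially"
      using ev_ge[OF L, of 1]
    proof eventually_elim
      case (elim n)
      define x where "x = real (Ls n)"
      have x1: "x \<ge> 1" using elim by (simp add: x_def)
      define S where "S = (\<Sum>k\<in>{I n..<I n + Ls n}. g k)"
      have b: "\<bar>S - r * x\<bar> \<le> K * sqrt x" using assms[of "I n" "Ls n"] by (simp add: S_def x_def)
      have "S / x - r = (S - r * x) / x" using x1 by (simp add: field_simps)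
      then have "\<bar>S / x - r\<bar> = \<bar>S - r * x\<bar> / x" using x1 by simp
      also have "\<dots> \<le> K * sqrt x / x" using b x1 by (simp add: divide_right_mono)
      also have "K * sqrt x / x = K / sqrt x"
        using x1 by (metis real_div_sqrt less_imp_le divide_divide_eq_right times_divide_eq_right mult.commute real_sqrt_gt_0_iff less_irrefl zero_less_one order_less_le_trans)
      also have "\<dots> \<le> \<bar>K / sqrt x\<bar>" by (rule abs_ge_self)
      finally show ?case by (simp add: S_def x_def)
    qed
  qed
  then show "((\<lambda>n. (\<Sum>k\<in>{I n..<I n + Ls n}. g k) / real (Ls n)) \<longlongrightarrow> r) sequentially"
    by (simp add: LIM_zero_iff)
qed

lemma avg_q: "seq_avg (\<lambda>k. q (u k)) (mean q)"
proof -
  obtain K where "\<And>i L. \<bar>Q q i L - mean q * real L\<bar> \<le> K * sqrt (real L)" using Q_mean_bound by blast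
  then show ?thesis by (intro bound_to_avg[of _ "mean q" K]) (simp add: Q_def)
qed

lemma avg_len: "seq_avg (\<lambda>j. real (len (u j))) lam"
proof -
  have "mean (\<lambda>c. real (len c)) = lam" by (simp add: mean_def mu_def lam_def field_simps)
  then show ?thesis using avg_q[of "\<lambda>c. real (len c)"] by simp
qed

lemma bounded_div:
  assumes "\<And>n. \<bar>x n\<bar> \<le> C" "filterlim (Ls::nat\<Rightarrow>nat) at_top sequentially"
  shows "((\<lambda>n. x n / real (Ls n)) \<longlongrightarrow> 0) sequentially"
proof -
  have z: "((\<lambda>n. C / real (Ls n)) \<longlongrightarrow> 0) sequentially"
    by (rule tendsto_divide_0[OF tendsto_const filterlim_at_top_imp_at_infinity[OF real_at_top[OF assms(2)]]])
  show ?thesis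
  proof (rule tendsto_0_le[OF z, where K=1])
    show "eventually (\<lambda>n. norm (x n / real (Ls n)) \<le> norm (C / real (Ls n)) * 1) sequentially"
      using ev_ge[OF assms(2), of 1]
    proof eventually_elim
      case (elim n)
      then have p: "real (Ls n) > 0" by simp
      have "\<bar>x n / real (Ls n)\<bar> = \<bar>x n\<bar> / real (Ls n)" using p by simp
      also have "\<dots> \<le> C / real (Ls n)" using assms(1)[of n] p by (simp add: divide_right_mono)
      also have "\<dots> \<le> \<bar>C / real (Ls n)\<bar>" by (rule abs_ge_self)
      finally show ?case by simp
    qed
  qed
qed

lemma transfer:
  fixes P g :: "nat \<Rightarrow> real"
  assumes B: "\<And>k. \<bar>P k\<bar> \<le> B"
    and cut: "\<And>a b. a \<le> b \<Longrightarrow> sum P {pos a..<pos b} = sum g {a..<b}"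
    and avg: "seq_avg g r"
  shows "seq_avg P (r / lam)"
  unfolding seq_avg_def
proof (intro allI impI)
  fix I Ls :: "nat \<Rightarrow> nat"
  assume L: "filterlim Ls at_top sequentially"
  define a where "a n = fc (I n)" for n
  define b where "b n = fc (I n + Ls n)" for n
  define M where "M n = b n - a n" for n
  define T where "T n = pos (b n) - pos (a n)" for n
  define S where "S n = (\<Sum>k\<in>{I n..<I n + Ls n}. P k)" for n
  define G where "G n = sum g {a n..<a n + M n}" for n
  have ab: "a n \<le> b n" for n unfolding a_def b_def by (rule fc_mono) simp
  have bM: "b n = a n + M n" for n using ab[of n] by (simp add: M_def)
  have h1: "I n \<le> pos (a n)" "pos (a n) \<le> I n + 3" "I n + Ls n \<le> pos (b n)" "pos (b n) \<le> I n + Ls n + 3" for n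
    unfolding a_def b_def using fc1 fc2 by auto
  have pab: "pos (a n) \<le> pos (b n)" for n using ab[of n] by simp
  have Tsum: "real (T n) = (\<Sum>j\<in>{a n..<a n + M n}. real (len (u j)))" for n
  proof -
    have "real (T n) = sum (\<lambda>k. 1::real) {pos (a n)..<pos (b n)}" using pab[of n] by (simp add: T_def)
    also have "\<dots> = (\<Sum>j\<in>{a n..<b n}. \<Sum>t<len (u j). (1::real))" by (rule sum_cut[OF ab])
    finally show ?thesis by (simp add: bM)
  qed
  have TL: "\<bar>real (T n) - real (Ls n)\<bar> \<le> 6" for n
    using h1[of n] pab[of n] unfolding T_def by linarith
  have MT: "real (T n) \<le> 4 * real (M n)" for n
    using pos_diff_le[OF ab[of n]] pab[of n] unfolding T_def M_def by linarith
  have SG: "\<bar>S n - G n\<bar> \<le> 6 * B" for n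
  proof -
    have "sum P {pos (a n)..<pos (b n)} = G n" using cut[OF ab[of n]] by (simp add: G_def bM)
    then show ?thesis using window_cut[of P B "I n" "Ls n", OF B] by (simp add: S_def a_def b_def)
  qed
  have Minf: "filterlim M at_top sequentially"
    unfolding filterlim_at_top
  proof
    fix Z :: nat
    show "eventually (\<lambda>n. Z \<le> M n) sequentially"
      using ev_ge[OF L, of "4 * Z + 6"]
    proof eventually_elim
      case (elim n)
      then show ?case using TL[of n] MT[of n] by linarith
    qed
  qed
  have lim1: "((\<lambda>n. G n / real (M n)) \<longlongrightarrow> r) sequentially"
    using avg Minf unfolding seq_avg_def G_def by blast
  have lim2: "((\<lambda>n. real (T n) / real (M n)) \<longlongrightarrow> lam) sequentially"
    using avg_len Minf unfolding seq_avg_def Tsum by blast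
  have lim3: "((\<lambda>n. real (M n) / real (T n)) \<longlongrightarrow> 1 / lam) sequentially"
  proof -
    have "((\<lambda>n. 1 / (real (T n) / real (M n))) \<longlongrightarrow> 1 / lam) sequentially"
      using lam_pos by (intro tendsto_divide tendsto_const lim2) simp
    then show ?thesis by simp
  qed
  have lim4: "((\<lambda>n. real (T n) / real (Ls n)) \<longlongrightarrow> 1) sequentially"
  proof -
    have "((\<lambda>n. (real (T n) - real (Ls n)) / real (Ls n)) \<longlongrightarrow> 0) sequentially"
      by (rule bounded_div[OF TL L])
    then have "((\<lambda>n. 1 + (real (T n) - real (Ls n)) / real (Ls n)) \<longlongrightarrow> 1 + 0) sequentially"
      by (intro tendsto_add tendsto_const)
    moreover have "eventually (\<lambda>n. 1 + (real (T n) - real (Ls n)) / real (Ls n) = real (T n) / real (Ls n)) sequentially"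
      using ev_ge[OF L, of 1] by eventually_elim (simp add: field_simps)
    ultimately show ?thesis using tendsto_cong by fastforce
  qed
  have lim5: "((\<lambda>n. (S n - G n) / real (Ls n)) \<longlongrightarrow> 0) sequentially"
    by (rule bounded_div[OF SG L])
  have lim: "((\<lambda>n. (S n - G n) / real (Ls n) + (G n / real (M n)) * (real (M n) / real (T n)) * (real (T n) / real (Ls n)))
      \<longlongrightarrow> 0 + r * (1 / lam) * 1) sequentially"
    by (intro tendsto_add tendsto_mult lim1 lim3 lim4 lim5)
  have ev: "eventually (\<lambda>n. (S n - G n) / real (Ls n) + (G n / real (M n)) * (real (M n) / real (T n)) * (real (T n) / real (Ls n))
      = S n / real (Ls n)) sequentially"
    using ev_ge[OF L, of 7]
  proof eventually_elim
    case (elim n)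
    have T0: "real (T n) > 0" using TL[of n] elim by linarith
    have M0: "real (M n) > 0" using MT[of n] T0 by linarith
    have L0: "real (Ls n) > 0" using elim by simp
    show ?case using T0 M0 L0 by (simp add: field_simps)
  qed
  have "((\<lambda>n. S n / real (Ls n)) \<longlongrightarrow> r / lam) sequentially"
    using tendsto_cong[OF ev] lim by simp
  then show "((\<lambda>n. (\<Sum>k\<in>{I n..<I n + Ls n}. P k) / real (Ls n)) \<longlongrightarrow> r / lam) sequentially"
    by (simp add: S_def)
qed

lemma sum_upt_conv: "(\<Sum>t<n. f t) = sum_list (map f [0..<n])"
  by (simp add: sum_list_distinct_conv_sum_set atLeast_upt)

definition ind :: "nat list \<Rightarrow> nat \<Rightarrow> real" where
  "ind w k = (if Oc w k then 1 else 0)"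

lemma ind_bound: "\<bar>ind w k\<bar> \<le> 1" by (simp add: ind_def)

lemma V_cut:
  assumes "w \<noteq> []" "\<forall>c\<in>set w. c \<le> 3" "a \<le> b"
  shows "sum (ind (V w)) {pos a..<pos b} = sum (ind w) {a..<b}"
proof -
  have inner: "(\<Sum>t<len (u j). ind (V w) (pos j + t)) = ind w j" for j
  proof -
    obtain n where n: "len (u j) = Suc n" using len_phi(1)[of "u j"] by (cases "len (u j)") auto
    have z: "ind (V w) (pos j + Suc t) = 0" if t: "t < n" for t
    proof (rule ccontr)
      assume "ind (V w) (pos j + Suc t) \<noteq> 0"
      then have "Oc (V w) (pos j + Suc t)" by (simp add: ind_def split: if_splits)
      then obtain j' where j': "pos j + Suc t = pos j'" using Oc_V_iff[OF assms(1,2)] by blast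
      have "j = j' \<and> Suc t = 0" using decomp_unique[of "Suc t" j 0 j'] j' t n len_phi(1)[of "u j'"] by simp
      then show False by simp
    qed
    have "(\<Sum>t<len (u j). ind (V w) (pos j + t)) = ind (V w) (pos j) + (\<Sum>t<n. ind (V w) (pos j + Suc t))"
      unfolding n sum.lessThan_Suc_shift by simp
    also have "(\<Sum>t<n. ind (V w) (pos j + Suc t)) = 0" using z by simp
    also have "ind (V w) (pos j) = ind w j" using Oc_V_iff[OF assms(1,2), of "pos j"] by (simp add: ind_def)
    finally show ?thesis by simp
  qed
  have "sum (ind (V w)) {pos a..<pos b} = (\<Sum>j\<in>{a..<b}. \<Sum>t<len (u j). ind (V w) (pos j + t))"
    by (rule sum_cut[OF assms(3)])
  also have "\<dots> = sum (ind w) {a..<b}" using inner by simp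
  finally show ?thesis .
qed

lemma V_avg:
  assumes "w \<noteq> []" "\<forall>c\<in>set w. c \<le> 3" "seq_avg (ind w) r"
  shows "seq_avg (ind (V w)) (r / lam)"
  by (rule transfer[OF ind_bound V_cut[OF assms(1,2)] assms(3)])

lemma letter_avg: "seq_avg (ind [c]) (mean (\<lambda>x. if x = c then 1 else 0))"
proof -
  have "ind [c] = (\<lambda>k. (\<lambda>x. if x = c then 1 else 0) (u k))"
    by (rule ext) (simp add: ind_def Oc_def)
  then show ?thesis using avg_q by simp
qed

lemma base_avg:
  fixes m :: "nat \<Rightarrow> real"
  assumes "length w \<le> 5"
    and chk: "\<forall>(c,d,e)\<in>set triples. (\<Sum>t<len c. (if take (length w) (drop t (phi c @ phi d @ phi e)) = w then 1 else 0::real)) = m c"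
  shows "seq_avg (ind w) (mean m / lam)"
proof (rule transfer[OF ind_bound _ avg_q])
  fix a b :: nat assume ab: "a \<le> b"
  have inner: "(\<Sum>t<len (u j). ind w (pos j + t)) = m (u j)" for j
  proof -
    have "(\<Sum>t<len (u j). ind w (pos j + t)) =
          (\<Sum>t<len (u j). (if take (length w) (drop t (blk3 j)) = w then 1 else 0::real))"
    proof (rule sum.cong)
      fix t assume "t \<in> {..<len (u j)}"
      then have t: "t < len (u j)" by simp
      have "map u [pos j + t..<pos j + t + length w] = take (length w) (drop t (blk3 j))"
        using window[OF t refl] assms(1) by simp
      then show "ind w (pos j + t) = (if take (length w) (drop t (blk3 j)) = w then 1 else 0)"
        by (simp add: ind_def Oc_map)
    qed simp
    also have "\<dots> = m (u j)" using chk R_triples'[of j] unfolding blk3_def by fastforce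
    finally show ?thesis .
  qed
  have "sum (ind w) {pos a..<pos b} = (\<Sum>j\<in>{a..<b}. \<Sum>t<len (u j). ind w (pos j + t))"
    by (rule sum_cut[OF ab])
  also have "\<dots> = sum (\<lambda>j. m (u j)) {a..<b}" using inner by simp
  finally show "sum (ind w) {pos a..<pos b} = sum (\<lambda>j. m (u j)) {a..<b}" .
qed

lemma avg_01: "\<exists>r. seq_avg (ind [0,1]) r"
  by (rule exI, rule base_avg[where m="\<lambda>c. if c = 0 then 2 else if c = 3 then 1 else 0"])
     (simp_all add: sum_upt_conv upt_rec triples_def)
lemma avg_10: "\<exists>r. seq_avg (ind [1,0]) r"
  by (rule exI, rule base_avg[where m="\<lambda>c. if c = 1 then 2 else if c = 2 then 1 else 0"])
     (simp_all add: sum_upt_conv upt_rec triples_def)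
lemma avg_p1: "\<exists>r. seq_avg (ind [0,1,3,0,1]) r"
  by (rule exI, rule base_avg[where m="\<lambda>c. if c = 0 \<or> c = 3 then 1 else 0"])
     (simp_all add: sum_upt_conv upt_rec triples_def)
lemma avg_p0: "\<exists>r. seq_avg (ind [1,0,2,1,0]) r"
  by (rule exI, rule base_avg[where m="\<lambda>c. if c = 1 \<or> c = 2 then 1 else 0"])
     (simp_all add: sum_upt_conv upt_rec triples_def)

lemma last_map_upt: "j < k \<Longrightarrow> last (map u [j..<k]) = u (k - 1)"
  by (simp add: last_map)

lemma V_decomp:
  assumes "factor v" "bispecial v" "length v > 5"
  shows "\<exists>w. factor w \<and> w \<noteq> [] \<and> v = V w \<and> length w < length v"
proof -
  obtain j k where jk: "1 \<le> j" "j \<le> k" "v = phiw (map u [j..<k]) @ p (u (k - 1))"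
    using bis_decomp[OF assms(1,2)] assms(3) by auto
  define w where "w = map u [j..<k]"
  have "j \<noteq> k" using jk(3) assms(3) by auto
  then have jk': "j < k" using jk(2) by simp
  have ne: "w \<noteq> []" using jk' by (simp add: w_def)
  have lw: "last w = u (k - 1)" using jk' by (simp add: w_def last_map)
  have fw: "factor w"
  proof -
    have "Oc w j" unfolding Oc_map w_def using jk' by simp
    then show ?thesis using factor_Oc by blast
  qed
  have vw: "v = V w" using jk(3) lw by (simp add: V_def w_def)
  have "length v = length (phiw w) + 5" using vw length_V by simp
  moreover have "length (phiw w) \<ge> 3 * length w" by (rule length_phiw)
  ultimately have "length w < length v" by simp
  then show ?thesis using fw ne vw by blast
qed

lemma existence: "factor w \<Longrightarrow> bispecial w \<Longrightarrow> w \<noteq> [] \<Longrightarrow> \<exists>r. seq_avg (ind w) r"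
proof (induction "length w" arbitrary: w rule: less_induct)
  case less
  show ?case
  proof (cases "length w \<le> 5")
    case True
    then have "w = [0] \<or> w = [1] \<or> w = [0,1] \<or> w = [1,0] \<or> w = [0,1,3,0,1] \<or> w = [1,0,2,1,0]"
      using short_bis less.prems by blast
    then show ?thesis using letter_avg avg_01 avg_10 avg_p1 avg_p0 by blast
  next
    case False
    then obtain w' where w': "factor w'" "w' \<noteq> []" "w = V w'" "length w' < length w"
      using V_decomp[OF less.prems(1,2)] by auto
    have "bispecial w'" using bis_w[OF w'(2,1)] less.prems(2) w'(3) by simp
    then obtain r where r: "seq_avg (ind w') r" using less.hyps[OF w'(4) w'(1) _ w'(2)] by blast
    have "\<forall>c\<in>set w'. c \<le> 3" using w'(1) factor_Oc Oc_set by blast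
    then have "seq_avg (ind w) (r / lam)" using V_avg[OF w'(2) _ r] w'(3) by simp
    then show ?thesis by blast
  qed
qed

lemma occ_window:
  assumes "w \<noteq> []"
  shows "\<bar>real (occ w (map u [i..<i+L])) - sum (ind w) {i..<i+L}\<bar> \<le> real (length w)"
proof -
  define A where "A = {t. t + length w \<le> L \<and> Oc w (i+t)}"
  define B where "B = {t. t < L \<and> Oc w (i+t)}"
  have occA: "occ w (map u [i..<i+L]) = card A"
    unfolding occ_def A_def
  proof (rule arg_cong[where f=card], rule Collect_cong)
    fix t
    show "(t + length w \<le> length (map u [i..<i + L]) \<and> take (length w) (drop t (map u [i..<i + L])) = w) =
          (t + length w \<le> L \<and> Oc w (i + t))"
    proof (cases "t + length w \<le> L")
      case True
      have "take (length w) (drop t (map u [i..<i + L])) = map u [i + t..<i + t + length w]"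
        using True by (simp add: drop_map take_map)
      then show ?thesis using True by (simp add: Oc_map)
    qed simp
  qed
  have sumB: "sum (ind w) {i..<i+L} = real (card B)"
  proof -
    have "sum (ind w) {i..<i+L} = sum (ind w) ((\<lambda>t. i + t) ` {..<L})"
      by (simp add: lessThan_atLeast0 image_add_atLeastLessThan add.commute)
    also have "\<dots> = (\<Sum>t<L. ind w (i + t))" by (simp add: sum.reindex)
    also have "\<dots> = (\<Sum>t<L. if Oc w (i + t) then 1 else 0)" by (simp add: ind_def)
    also have "\<dots> = real (card ({..<L} \<inter> {t. Oc w (i + t)}))" by (simp add: sum.If_cases)
    also have "{..<L} \<inter> {t. Oc w (i + t)} = B" by (auto simp: B_def)
    finally show ?thesis .
  qed
  have lw: "length w > 0" using assms by simp
  have AB: "A \<subseteq> B"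
  proof
    fix t assume "t \<in> A"
    then have t: "t + length w \<le> L" "Oc w (i+t)" by (auto simp: A_def)
    have "t < L" using lw t(1) by linarith
    then show "t \<in> B" using t(2) by (simp add: B_def)
  qed
  have fB: "finite B" by (simp add: B_def)
  have BA: "B - A \<subseteq> {L - length w..<L}" by (auto simp: A_def B_def)
  have cBA: "card (B - A) \<le> length w"
    using card_mono[OF _ BA] by simp
  have "card B = card A + card (B - A)"
    using card_Diff_subset[OF finite_subset[OF AB fB] AB] card_mono[OF fB AB] by simp
  then show ?thesis using occA sumB cBA by simp
qed

lemma seq_to_freq:
  assumes "w \<noteq> []" "seq_avg (ind w) r"
  shows "has_freq w r"
proof (rule ccontr)
  assume "\<not> has_freq w r"
  then obtain e where e: "e > 0" and bad: "\<And>N. \<exists>v. factor v \<and> length v \<ge> N \<and>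
      \<not> \<bar>real (occ w v) / real (length v) - r\<bar> < e"
    unfolding has_freq_def by blast
  define vs where "vs N = (SOME v. factor v \<and> length v \<ge> N \<and> \<not> \<bar>real (occ w v) / real (length v) - r\<bar> < e)" for N
  have vs: "factor (vs N) \<and> length (vs N) \<ge> N \<and> \<not> \<bar>real (occ w (vs N)) / real (length (vs N)) - r\<bar> < e" for N
    unfolding vs_def by (rule someI_ex) (rule bad)
  define Ls where "Ls N = length (vs N)" for N
  define I where "I N = (SOME i. vs N = map u [i..<i + Ls N])" for N
  have I: "vs N = map u [I N..<I N + Ls N]" for N
  proof -
    have "\<exists>i. vs N = map u [i..<i + Ls N]" using vs[of N] unfolding factor_def Ls_def by blast
    then show ?thesis unfolding I_def by (rule someI_ex)
  qed
  have L: "filterlim Ls at_top sequentially"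
    unfolding filterlim_at_top
  proof
    fix Z :: nat
    show "eventually (\<lambda>n. Z \<le> Ls n) sequentially"
      unfolding eventually_sequentially using vs by (auto simp: Ls_def intro: order_trans)
  qed
  have lim1: "((\<lambda>n. sum (ind w) {I n..<I n + Ls n} / real (Ls n)) \<longlongrightarrow> r) sequentially"
    using assms(2) L unfolding seq_avg_def by blast
  have lim2: "((\<lambda>n. (real (occ w (vs n)) - sum (ind w) {I n..<I n + Ls n}) / real (Ls n)) \<longlongrightarrow> 0) sequentially"
    by (rule bounded_div[OF _ L]) (use occ_window[OF assms(1)] I in simp)
  have "((\<lambda>n. (real (occ w (vs n)) - sum (ind w) {I n..<I n + Ls n}) / real (Ls n)
       + sum (ind w) {I n..<I n + Ls n} / real (Ls n)) \<longlongrightarrow> 0 + r) sequentially"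
    by (rule tendsto_add[OF lim2 lim1])
  then have lim: "((\<lambda>n. real (occ w (vs n)) / real (length (vs n))) \<longlongrightarrow> r) sequentially"
    by (simp add: Ls_def add_divide_distrib[symmetric])
  then have "eventually (\<lambda>n. dist (real (occ w (vs n)) / real (length (vs n))) r < e) sequentially"
    using e by (rule tendstoD)
  then obtain n where "dist (real (occ w (vs n)) / real (length (vs n))) r < e"
    using eventually_sequentially by auto
  then show False using vs[of n] by (simp add: dist_real_def)
qed

lemma abs_contra: "\<bar>(x::real) - r\<bar> < e \<Longrightarrow> \<bar>x - s\<bar> < e \<Longrightarrow> e = \<bar>r - s\<bar> / 2 \<Longrightarrow> False"
  by (cases "r \<le> s"; cases "x \<le> r"; cases "x \<le> s") (simp_all add: abs_if split: if_splits)

lemma freq_unique: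
  assumes "has_freq w r" "has_freq w s"
  shows "r = s"
proof (rule ccontr)
  assume "r \<noteq> s"
  define e where "e = \<bar>r - s\<bar> / 2"
  have e: "e > 0" using \<open>r \<noteq> s\<close> by (simp add: e_def)
  obtain N1 where N1: "\<And>v. factor v \<and> length v \<ge> N1 \<Longrightarrow> \<bar>real (occ w v) / real (length v) - r\<bar> < e"
    using assms(1) e unfolding has_freq_def by blast
  obtain N2 where N2: "\<And>v. factor v \<and> length v \<ge> N2 \<Longrightarrow> \<bar>real (occ w v) / real (length v) - s\<bar> < e"
    using assms(2) e unfolding has_freq_def by blast
  define v where "v = map u [0..<max N1 N2]"
  have fv: "factor v" unfolding factor_def v_def by (rule exI[of _ 0]) simp
  have "\<bar>real (occ w v) / real (length v) - r\<bar> < e" "\<bar>real (occ w v) / real (length v) - s\<bar> < e"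
    using N1[of v] N2[of v] fv by (auto simp: v_def)
  then show False using abs_contra e_def by blast
qed

lemma rho_eq: "has_freq w r \<Longrightarrow> rho w = r"
  unfolding rho_def using freq_unique by blast

theorem proposition23:
  fixes v :: "nat list"
  assumes "factor v" and "bispecial v" and "length v > 5"
  shows "\<exists>w. factor w \<and> w \<noteq> [] \<and> v = phiw w @ p (last w) \<and> rho v = rho w / lam"
proof -
  obtain w where w: "factor w" "w \<noteq> []" "v = V w" "length w < length v"
    using V_decomp[OF assms] by blast
  have bw: "bispecial w" using bis_w[OF w(2,1)] assms(2) w(3) by simp
  obtain r where r: "seq_avg (ind w) r" using existence[OF w(1) bw w(2)] by blast
  have w3: "\<forall>c\<in>set w. c \<le> 3" using w(1) factor_Oc Oc_set by blast
  have rv: "seq_avg (ind v) (r / lam)" using V_avg[OF w(2) w3 r] w(3) by simp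
  have "v \<noteq> []" using assms(3) by auto
  then have "rho v = r / lam" using rho_eq seq_to_freq rv by blast
  moreover have "rho w = r" using rho_eq seq_to_freq[OF w(2) r] by blast
  ultimately show ?thesis using w by (auto simp: V_def)
qed


end
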